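(* Let $d\geq 3$, $k\geq 1$ and $2\leq l\leq d$. For every directed plateau polyhypercube $P$ of dimension $d$ and width $k$, the projection of $P$ onto the coordinate plane $(\vec{i_1},\vec{i_l})$ is a directed column-convex polyomino of width $k$.
   Context: Work in $\mathbb{Z}^d$ with orthonormal coordinate system $(0,\vec{i_1},\dots,\vec{i_d})$; a cell is a unit hypercube of the lattice. A polyhypercube of dimension $d$ is a finite union of cells, connected through their $(d-1)$-dimensional faces, defined up to translation. Its width is the number of distinct values of the $\vec{i_1}$-coordinate taken by its cells (so a polyhypercube of width one is called a stratum; the strata of a polyhypercube are its intersections with the layers of constant $\vec{i_1}$-coordinate). A plateau is a stratum that is a hyperrectangle (a box). An elementary step is a positive move of one unit along one axis $\vec{i_j}$, $1\leq j\leq d$. A polyhypercube is directed if there is a distinguished cell (the root) from which every cell can be reached by a path of cells of the polyhypercube using only elementary steps. A directed plateau polyhypercube is a directed polyhypercube all of whose strata are plateaus. The projection onto the plane $(\vec{i_1},\vec{i_l})$ is the set of unit squares $(x_1,x_l)$ such that some cell of the polyhypercube has these $\vec{i_1}$ and $\vec{i_l}$ coordinates; it is a polyomino whose columns correspond to the values of the $\vec{i_1}$-coordinate. A polyomino (finite edge-connected union of unit squares up to translation) is column-convex if its intersection with every column is connected, and directed if every cell can be reached from a root cell by a path of cells using only unit North or East steps; its width is its number of columns and its area its number of cells. *)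

theory Defs
  imports Main
begin

text \<open>A cell of Z^d is identified with its minimal corner, a function nat => int whose
 coordinates 1..d are meaningful (coordinate 1 is the i_1 axis) and which is 0 elsewhere.\<close>

definition cell_space :: "nat \<Rightarrow> (nat \<Rightarrow> int) set" where
  "cell_space d = {x. \<forall>j. (j < 1 \<or> j > d) \<longrightarrow> x j = 0}"

definition face_adjacent :: "nat \<Rightarrow> (nat \<Rightarrow> int) \<Rightarrow> (nat \<Rightarrow> int) \<Rightarrow> bool" where
  "face_adjacent d x y \<longleftrightarrow> (\<exists>j\<in>{1..d}. (y = x(j := x j + 1) \<or> x = y(j := y j + 1)))"

definition polyhypercube :: "nat \<Rightarrow> (nat \<Rightarrow> int) set \<Rightarrow> bool" where
  "polyhypercube d P \<longleftrightarrow> finite P \<and> P \<noteq> {} \<and> P \<subseteq> cell_space d \<and>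
     (\<forall>x\<in>P. \<forall>y\<in>P. (x, y) \<in> {(a, b). a \<in> P \<and> b \<in> P \<and> face_adjacent d a b}\<^sup>*)"

definition elem_step :: "nat \<Rightarrow> (nat \<Rightarrow> int) \<Rightarrow> (nat \<Rightarrow> int) \<Rightarrow> bool" where
  "elem_step d x y \<longleftrightarrow> (\<exists>j\<in>{1..d}. y = x(j := x j + 1))"

definition directed_ph :: "nat \<Rightarrow> (nat \<Rightarrow> int) set \<Rightarrow> bool" where
  "directed_ph d P \<longleftrightarrow> (\<exists>r\<in>P. \<forall>c\<in>P. (r, c) \<in> {(a, b). a \<in> P \<and> b \<in> P \<and> elem_step d a b}\<^sup>*)"

definition ph_width :: "(nat \<Rightarrow> int) set \<Rightarrow> nat" where
  "ph_width P = card ((\<lambda>x. x 1) ` P)"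

definition stratum :: "(nat \<Rightarrow> int) set \<Rightarrow> int \<Rightarrow> (nat \<Rightarrow> int) set" where
  "stratum P a = {x \<in> P. x 1 = a}"

definition is_box :: "nat \<Rightarrow> (nat \<Rightarrow> int) set \<Rightarrow> bool" where
  "is_box d S \<longleftrightarrow> (\<exists>lo hi. S = {x \<in> cell_space d. \<forall>j\<in>{1..d}. lo j \<le> x j \<and> x j \<le> hi j})"

definition directed_plateau_ph :: "nat \<Rightarrow> (nat \<Rightarrow> int) set \<Rightarrow> bool" where
  "directed_plateau_ph d P \<longleftrightarrow> polyhypercube d P \<and> directed_ph d P \<and>
     (\<forall>a \<in> (\<lambda>x. x 1) ` P. is_box d (stratum P a))"

definition projection :: "(nat \<Rightarrow> int) set \<Rightarrow> nat \<Rightarrow> (int \<times> int) set" where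
  "projection P l = (\<lambda>x. (x 1, x l)) ` P"

text \<open>Polyominoes: squares (column, row) in Z^2.\<close>
definition sq_adjacent :: "int \<times> int \<Rightarrow> int \<times> int \<Rightarrow> bool" where
  "sq_adjacent p q \<longleftrightarrow> \<bar>fst p - fst q\<bar> + \<bar>snd p - snd q\<bar> = 1"

definition polyomino :: "(int \<times> int) set \<Rightarrow> bool" where
  "polyomino Q \<longleftrightarrow> finite Q \<and> Q \<noteq> {} \<and>
     (\<forall>p\<in>Q. \<forall>q\<in>Q. (p, q) \<in> {(a, b). a \<in> Q \<and> b \<in> Q \<and> sq_adjacent a b}\<^sup>*)"

definition column_convex :: "(int \<times> int) set \<Rightarrow> bool" where
  "column_convex Q \<longleftrightarrow> (\<forall>a b1 b2 b. (a, b1) \<in> Q \<and> (a, b2) \<in> Q \<and> b1 \<le> b \<and> b \<le> b2 \<longrightarrow> (a, b) \<in> Q)"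

definition ne_step :: "int \<times> int \<Rightarrow> int \<times> int \<Rightarrow> bool" where
  "ne_step p q \<longleftrightarrow> q = (fst p + 1, snd p) \<or> q = (fst p, snd p + 1)"

definition directed_polyomino :: "(int \<times> int) set \<Rightarrow> bool" where
  "directed_polyomino Q \<longleftrightarrow> (\<exists>r\<in>Q. \<forall>c\<in>Q. (r, c) \<in> {(a, b). a \<in> Q \<and> b \<in> Q \<and> ne_step a b}\<^sup>*)"

definition polyomino_width :: "(int \<times> int) set \<Rightarrow> nat" where
  "polyomino_width Q = card (fst ` Q)"

end

theory Submission
  imports Defs
begin

lemma map_rtrancl:
  assumes "(x, y) \<in> {(a, b). a \<in> P \<and> b \<in> P \<and> R a b}\<^sup>*"
    and "\<And>a b. a \<in> P \<Longrightarrow> b \<in> P \<Longrightarrow> R a b \<Longrightarrow> f a = f b \<or> S (f a) (f b)"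
  shows "(f x, f y) \<in> {(a, b). a \<in> f ` P \<and> b \<in> f ` P \<and> S a b}\<^sup>*"
  using assms(1)
proof (induction rule: rtrancl_induct)
  case base
  then show ?case by simp
next
  case (step y z)
  then have yz: "y \<in> P" "z \<in> P" "R y z" by auto
  from assms(2)[OF yz] show ?case
  proof
    assume "f y = f z" then show ?thesis using step.IH by simp
  next
    assume "S (f y) (f z)"
    then have "(f y, f z) \<in> {(a, b). a \<in> f ` P \<and> b \<in> f ` P \<and> S a b}" using yz by auto
    then show ?thesis using step.IH by (meson rtrancl.rtrancl_into_rtrancl)
  qed
qed

lemma upd_coords:
  assumes "b = a(j := a j + (1::int))" "l \<noteq> (1::nat)"
  shows "(b 1 = a 1 \<and> b l = a l) \<or> (b 1 = a 1 + 1 \<and> b l = a l) \<or> (b 1 = a 1 \<and> b l = a l + 1)"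
proof -
  have "b 1 = a 1 + (if j = 1 then 1 else 0)" "b l = a l + (if j = l then 1 else 0)"
    using assms(1) by simp_all
  then show ?thesis using assms(2) by (cases "j = 1"; cases "j = l") simp_all
qed

theorem theorem1:
  fixes d k l :: nat and P :: "(nat \<Rightarrow> int) set"
  assumes "d \<ge> 3" and "k \<ge> 1" and "2 \<le> l" and "l \<le> d"
    and "directed_plateau_ph d P" and "ph_width P = k"
  shows "polyomino (projection P l) \<and> column_convex (projection P l)
         \<and> directed_polyomino (projection P l) \<and> polyomino_width (projection P l) = k"
proof -
  define f where "f = (\<lambda>x::nat\<Rightarrow>int. (x 1, x l))"
  have Q: "projection P l = f ` P" unfolding projection_def f_def by simp
  have ph: "polyhypercube d P" and dir: "directed_ph d P"
    and box: "\<forall>a \<in> (\<lambda>x. x 1) ` P. is_box d (stratum P a)"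
    using assms(5) unfolding directed_plateau_ph_def by auto
  have l1: "l \<noteq> 1" using assms(3) by simp
  have lin: "l \<in> {1..d}" using assms(3,4) by simp
  have A: "polyomino (f ` P)"
    unfolding polyomino_def
  proof (intro conjI ballI)
    show "finite (f ` P)" using ph unfolding polyhypercube_def by simp
    show "f ` P \<noteq> {}" using ph unfolding polyhypercube_def by simp
    fix p q assume "p \<in> f ` P" "q \<in> f ` P"
    then obtain x y where xy: "x \<in> P" "y \<in> P" "p = f x" "q = f y" by auto
    have "(x, y) \<in> {(a, b). a \<in> P \<and> b \<in> P \<and> face_adjacent d a b}\<^sup>*"
      using ph xy unfolding polyhypercube_def by auto
    then have "(f x, f y) \<in> {(a, b). a \<in> f ` P \<and> b \<in> f ` P \<and> sq_adjacent a b}\<^sup>*"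
    proof (rule map_rtrancl)
      fix a b assume "face_adjacent d a b"
      then obtain j where j: "j \<in> {1..d}" "b = a(j := a j + 1) \<or> a = b(j := b j + 1)"
        unfolding face_adjacent_def by auto
      show "f a = f b \<or> sq_adjacent (f a) (f b)"
      proof (cases "b = a(j := a j + 1)")
        case True
        from upd_coords[OF True l1] show ?thesis unfolding f_def sq_adjacent_def by auto
      next
        case False
        then have "a = b(j := b j + 1)" using j by blast
        from upd_coords[OF this l1] show ?thesis unfolding f_def sq_adjacent_def by auto
      qed
    qed
    then show "(p, q) \<in> {(a, b). a \<in> f ` P \<and> b \<in> f ` P \<and> sq_adjacent a b}\<^sup>*"
      using xy by simp
  qed
  have B: "column_convex (f ` P)"
    unfolding column_convex_def
  proof (intro allI impI)
    fix a b1 b2 b assume h: "(a, b1) \<in> f ` P \<and> (a, b2) \<in> f ` P \<and> b1 \<le> b \<and> b \<le> b2"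
    have "(a, b1) \<in> f ` P" using h by simp
    then obtain x where x: "x \<in> P" "f x = (a, b1)" by (metis imageE)
    have "(a, b2) \<in> f ` P" using h by simp
    then obtain y where y: "y \<in> P" "f y = (a, b2)" by (metis imageE)
    have xy: "x \<in> P" "y \<in> P" using x y by simp_all
    have xa: "x 1 = a" "x l = b1" "y 1 = a" "y l = b2" using x(2) y(2) unfolding f_def by simp_all
    have "a \<in> (\<lambda>x. x 1) ` P" using xa(1) xy(1) by (metis image_eqI)
    then have "is_box d (stratum P a)" using box by blast
    then obtain lo hi where S: "stratum P a = {x \<in> cell_space d. \<forall>j\<in>{1..d}. lo j \<le> x j \<and> x j \<le> hi j}"
      unfolding is_box_def by blast
    have xs: "x \<in> stratum P a" "y \<in> stratum P a" using xy xa unfolding stratum_def by auto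
    define z where "z = x(l := b)"
    have "x \<in> cell_space d" using xs(1) S by blast
    then have "z \<in> cell_space d" using lin unfolding z_def cell_space_def by simp
    moreover have "\<forall>j\<in>{1..d}. lo j \<le> z j \<and> z j \<le> hi j"
    proof
      fix j assume j: "j \<in> {1..d}"
      show "lo j \<le> z j \<and> z j \<le> hi j"
      proof (cases "j = l")
        case True
        have "lo l \<le> x l" "y l \<le> hi l" using xs S lin by auto
        then show ?thesis using True h xa unfolding z_def by auto
      next
        case False
        then show ?thesis using xs S j unfolding z_def by auto
      qed
    qed
    ultimately have "z \<in> stratum P a" using S by blast
    then have "z \<in> P" unfolding stratum_def by auto
    moreover have "f z = (a, b)" unfolding f_def z_def using xa l1 by auto
    ultimately show "(a, b) \<in> f ` P" by force
  qed
  have C: "directed_polyomino (f ` P)"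
    unfolding directed_polyomino_def
  proof -
    obtain r where r: "r \<in> P" "\<forall>c\<in>P. (r, c) \<in> {(a, b). a \<in> P \<and> b \<in> P \<and> elem_step d a b}\<^sup>*"
      using dir unfolding directed_ph_def by blast
    have "\<forall>q\<in>f ` P. (f r, q) \<in> {(a, b). a \<in> f ` P \<and> b \<in> f ` P \<and> ne_step a b}\<^sup>*"
    proof
      fix q assume "q \<in> f ` P"
      then obtain c where c: "c \<in> P" "q = f c" by auto
      have "(f r, f c) \<in> {(a, b). a \<in> f ` P \<and> b \<in> f ` P \<and> ne_step a b}\<^sup>*"
        using r(2) c(1)
      proof (intro map_rtrancl[where R = "elem_step d"], blast)
        fix a b assume "elem_step d a b"
        then obtain j where j: "j \<in> {1..d}" "b = a(j := a j + 1)"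
          unfolding elem_step_def by auto
        show "f a = f b \<or> ne_step (f a) (f b)"
          using upd_coords[OF j(2) l1] unfolding f_def ne_step_def by auto
      qed
      then show "(f r, q) \<in> {(a, b). a \<in> f ` P \<and> b \<in> f ` P \<and> ne_step a b}\<^sup>*"
        using c by simp
    qed
    then show "\<exists>r\<in>f ` P. \<forall>c\<in>f ` P. (r, c) \<in> {(a, b). a \<in> f ` P \<and> b \<in> f ` P \<and> ne_step a b}\<^sup>*"
      using r(1) by blast
  qed
  have D: "polyomino_width (f ` P) = k"
    using assms(6) unfolding polyomino_width_def ph_width_def f_def
    by (simp add: image_image)
  show ?thesis using A B C D Q by simp
qed

end
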